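(* Let $G$ be a finite group, $H\leq G$, $T$ a right transversal of $H$ in $G$ containing $1$, and $\chi$ a linear character of $H$. For $g\in G$ write $g=\mathsf{H}(g)\mathsf{T}(g)$ with $\mathsf{H}(g)\in H$, $\mathsf{T}(g)\in T$, and set $\chi_{\mathsf{H}}(g)=\chi(\mathsf{H}(g))$. Let $G$ act on $T\times T$ by $(s,t)\cdot g=(\mathsf{T}(sg),\mathsf{T}(tg))$. For $t\in T$, the orbit (orbital) $\mathcal{O}$ of $(1,t)$ is called orientable if for all $(u,v)\in\mathcal{O}$ and all $g,k\in Hu\cap t^{-1}Hv$ one has $\chi_{\mathsf{H}}(g)^{-1}\chi_{\mathsf{H}}(tg)=\chi_{\mathsf{H}}(k)^{-1}\chi_{\mathsf{H}}(tk)$. Then $\mathcal{O}$ is orientable if and only if $\chi(tht^{-1}h^{-1})=1$ for all $h\in H\cap t^{-1}Ht$.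
   Context: A right transversal $T$ to $H$ in $G$ is a set such that every $g\in G$ factorises uniquely as $g=ht$ with $h\in H$, $t\in T$. *)

theory Defs
  imports "HOL-Algebra.Coset" Complex_Main
begin

definition right_transversal :: "('a, 'b) monoid_scheme \<Rightarrow> 'a set \<Rightarrow> 'a set \<Rightarrow> bool" where
  "right_transversal G H T \<longleftrightarrow> T \<subseteq> carrier G \<and>
     (\<forall>g\<in>carrier G. \<exists>!p. fst p \<in> H \<and> snd p \<in> T \<and> g = fst p \<otimes>\<^bsub>G\<^esub> snd p)"

definition Hpart :: "('a, 'b) monoid_scheme \<Rightarrow> 'a set \<Rightarrow> 'a set \<Rightarrow> 'a \<Rightarrow> 'a" where
  "Hpart G H T g = fst (THE p. fst p \<in> H \<and> snd p \<in> T \<and> g = fst p \<otimes>\<^bsub>G\<^esub> snd p)"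

definition Tpart :: "('a, 'b) monoid_scheme \<Rightarrow> 'a set \<Rightarrow> 'a set \<Rightarrow> 'a \<Rightarrow> 'a" where
  "Tpart G H T g = snd (THE p. fst p \<in> H \<and> snd p \<in> T \<and> g = fst p \<otimes>\<^bsub>G\<^esub> snd p)"

definition linear_character :: "('a, 'b) monoid_scheme \<Rightarrow> 'a set \<Rightarrow> ('a \<Rightarrow> complex) \<Rightarrow> bool" where
  "linear_character G H \<chi> \<longleftrightarrow> (\<forall>h\<in>H. \<chi> h \<noteq> 0) \<and>
     (\<forall>h\<in>H. \<forall>k\<in>H. \<chi> (h \<otimes>\<^bsub>G\<^esub> k) = \<chi> h * \<chi> k)"

definition chiH :: "('a, 'b) monoid_scheme \<Rightarrow> 'a set \<Rightarrow> 'a set \<Rightarrow> ('a \<Rightarrow> complex) \<Rightarrow> 'a \<Rightarrow> complex" where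
  "chiH G H T \<chi> g = \<chi> (Hpart G H T g)"

definition orbital :: "('a, 'b) monoid_scheme \<Rightarrow> 'a set \<Rightarrow> 'a set \<Rightarrow> 'a \<Rightarrow> ('a \<times> 'a) set" where
  "orbital G H T t = {(Tpart G H T (\<one>\<^bsub>G\<^esub> \<otimes>\<^bsub>G\<^esub> g), Tpart G H T (t \<otimes>\<^bsub>G\<^esub> g)) | g. g \<in> carrier G}"

definition orientable :: "('a, 'b) monoid_scheme \<Rightarrow> 'a set \<Rightarrow> 'a set \<Rightarrow> ('a \<Rightarrow> complex) \<Rightarrow> 'a \<Rightarrow> bool" where
  "orientable G H T \<chi> t \<longleftrightarrow>
     (\<forall>(u, v) \<in> orbital G H T t.
        \<forall>g \<in> (H #>\<^bsub>G\<^esub> u) \<inter> (inv\<^bsub>G\<^esub> t <#\<^bsub>G\<^esub> (H #>\<^bsub>G\<^esub> v)).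
        \<forall>k \<in> (H #>\<^bsub>G\<^esub> u) \<inter> (inv\<^bsub>G\<^esub> t <#\<^bsub>G\<^esub> (H #>\<^bsub>G\<^esub> v)).
          inverse (chiH G H T \<chi> g) * chiH G H T \<chi> (t \<otimes>\<^bsub>G\<^esub> g) =
          inverse (chiH G H T \<chi> k) * chiH G H T \<chi> (t \<otimes>\<^bsub>G\<^esub> k))"

end

theory Submission
  imports Defs
begin

lemma decomp:
  assumes "right_transversal G H T" "g \<in> carrier G"
  shows "Hpart G H T g \<in> H \<and> Tpart G H T g \<in> T \<and> g = Hpart G H T g \<otimes>\<^bsub>G\<^esub> Tpart G H T g"
proof -
  have "\<exists>!p. fst p \<in> H \<and> snd p \<in> T \<and> g = fst p \<otimes>\<^bsub>G\<^esub> snd p"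
    using assms unfolding right_transversal_def by blast
  from theI'[OF this] show ?thesis unfolding Hpart_def Tpart_def by blast
qed

lemma uniq:
  fixes G (structure)
  assumes "group G" "subgroup H G" "right_transversal G H T" "a \<in> H" "b \<in> T"
  shows "Hpart G H T (a \<otimes>\<^bsub>G\<^esub> b) = a \<and> Tpart G H T (a \<otimes>\<^bsub>G\<^esub> b) = b"
proof -
  interpret group G by fact
  have c: "a \<otimes> b \<in> carrier G" using assms(3,4,5) subgroup.mem_carrier[OF assms(2)]
    unfolding right_transversal_def by blast
  have ex: "\<exists>!p. fst p \<in> H \<and> snd p \<in> T \<and> a \<otimes> b = fst p \<otimes> snd p"
    using assms(3) c unfolding right_transversal_def by blast
  have "(THE p. fst p \<in> H \<and> snd p \<in> T \<and> a \<otimes> b = fst p \<otimes> snd p) = (a, b)"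
    by (rule the1_equality[OF ex]) (simp add: assms(4,5))
  then show ?thesis unfolding Hpart_def Tpart_def by simp
qed

lemma aux1: "(a::complex) = a*a \<Longrightarrow> a \<noteq> 0 \<Longrightarrow> a = 1"
  by (metis mult.right_neutral mult_left_cancel)

lemma cancel1:
  fixes G (structure)
  assumes "group G" "x \<in> carrier G" "y \<in> carrier G"
  shows "inv x \<otimes> (x \<otimes> y) = y" and "x \<otimes> (inv x \<otimes> y) = y"
proof -
  interpret group G by fact
  show "inv x \<otimes> (x \<otimes> y) = y" "x \<otimes> (inv x \<otimes> y) = y" using assms by (simp_all add: m_assoc[symmetric])
qed

lemma chi_one:
  fixes G (structure)
  assumes "group G" "subgroup H G" "linear_character G H \<chi>"
  shows "\<chi> \<one>\<^bsub>G\<^esub> = 1"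
proof -
  interpret group G by fact
  have o: "\<one> \<in> H" using assms(2) subgroup.one_closed by blast
  have "\<chi> (\<one> \<otimes> \<one>) = \<chi> \<one> * \<chi> \<one>" using assms(3) o unfolding linear_character_def by blast
  then have e: "\<chi> \<one> = \<chi> \<one> * \<chi> \<one>" by (simp del: l_one r_one add: one_closed) 
  have "\<chi> \<one> \<noteq> 0" using assms(3) o unfolding linear_character_def by blast
  with e show ?thesis by (rule aux1)
qed

lemma chi_inv:
  fixes G (structure)
  assumes "group G" "subgroup H G" "linear_character G H \<chi>" "x \<in> H"
  shows "\<chi> (inv\<^bsub>G\<^esub> x) = inverse (\<chi> x)"
proof -
  interpret group G by fact
  have i: "inv x \<in> H" by (rule subgroup.m_inv_closed[OF assms(2,4)])
  have xc: "x \<in> carrier G" by (rule subgroup.mem_carrier[OF assms(2,4)])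
  have e1: "\<chi> (x \<otimes> inv x) = \<chi> x * \<chi> (inv x)" using bspec[OF bspec[OF conjunct2[OF assms(3)[unfolded linear_character_def]] assms(4)] i] .
  have e2: "\<chi> (x \<otimes> inv x) = 1" using chi_one[OF assms(1-3)] xc by simp
  have "\<chi> x * \<chi> (inv x) = 1" using e1[symmetric] e2 by (rule trans)
  then show ?thesis by (rule inverse_unique[symmetric])
qed

theorem proposition3p6:
  fixes G (structure) and H T :: "'a set" and \<chi> :: "'a \<Rightarrow> complex" and t :: 'a
  assumes "group G" and "finite (carrier G)" and "subgroup H G"
    and "right_transversal G H T" and "\<one>\<^bsub>G\<^esub> \<in> T"
    and "linear_character G H \<chi>"
    and "t \<in> T"
  shows "orientable G H T \<chi> t \<longleftrightarrow>
    (\<forall>h \<in> H \<inter> (inv\<^bsub>G\<^esub> t <#\<^bsub>G\<^esub> (H #>\<^bsub>G\<^esub> t)).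
       \<chi> (t \<otimes>\<^bsub>G\<^esub> h \<otimes>\<^bsub>G\<^esub> inv\<^bsub>G\<^esub> t \<otimes>\<^bsub>G\<^esub> inv\<^bsub>G\<^esub> h) = 1)"
proof -
  interpret group G by fact
  note sg = assms(3)
  note rt = assms(4)
  note lc = assms(6)
  have Hc: "H \<subseteq> carrier G" by (rule subgroup.subset[OF sg])
  have Tc: "T \<subseteq> carrier G" using rt unfolding right_transversal_def by (rule conjunct1)
  have tc: "t \<in> carrier G" using Tc assms(7) by (rule subsetD)
  have oH: "\<one> \<in> H" by (rule subgroup.one_closed[OF sg])
  have mulH: "x \<otimes> y \<in> H" if "x \<in> H" "y \<in> H" for x y by (rule subgroup.m_closed[OF sg that])
  have invH: "inv x \<in> H" if "x \<in> H" for x by (rule subgroup.m_inv_closed[OF sg that])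
  have lc': "(\<forall>h\<in>H. \<chi> h \<noteq> 0) \<and> (\<forall>h\<in>H. \<forall>k\<in>H. \<chi> (h \<otimes> k) = \<chi> h * \<chi> k)"
    using lc unfolding linear_character_def .
  have chim: "\<chi> (x \<otimes> y) = \<chi> x * \<chi> y" if "x \<in> H" "y \<in> H" for x y
    using bspec[OF bspec[OF conjunct2[OF lc'] that(1)] that(2)] .
  have chinz: "\<chi> x \<noteq> 0" if "x \<in> H" for x
    using bspec[OF conjunct1[OF lc'] that] .
  have chii: "\<chi> (inv x) = inverse (\<chi> x)" if "x \<in> H" for x
    by (rule chi_inv[OF assms(1,3,6) that])
  have chi1: "\<chi> \<one> = 1" using chi_one[OF assms(1,3,6)] .
  show ?thesis
  proof
    assume ori: "orientable G H T \<chi> t"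
    show "\<forall>h \<in> H \<inter> (inv t <# (H #> t)). \<chi> (t \<otimes> h \<otimes> inv t \<otimes> inv h) = 1"
    proof
      fix h assume hm: "h \<in> H \<inter> (inv t <# (H #> t))"
      then have hH: "h \<in> H" by blast
      from hm obtain c where cH: "c \<in> H" and hc: "h = inv t \<otimes> (c \<otimes> t)"
        unfolding l_coset_def r_coset_def by blast
      have hcar: "h \<in> carrier G" using hH Hc by blast
      have ccar: "c \<in> carrier G" using cH Hc by blast
      have th: "t \<otimes> h = c \<otimes> t" using hc tc ccar by (simp add: m_assoc cancel1[OF assms(1)])
      have thi: "t \<otimes> h \<otimes> inv t = c" using hc tc ccar by (simp add: m_assoc cancel1[OF assms(1)])
      have u1: "Tpart G H T (\<one> \<otimes> \<one>) = \<one>" using uniq[OF assms(1,3,4) oH assms(5)] by simp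
      have u2: "Tpart G H T (t \<otimes> \<one>) = t" using uniq[OF assms(1,3,4) oH assms(7)] tc by simp
      have orb: "(\<one>, t) \<in> orbital G H T t" unfolding orbital_def
        using u1 u2 by (metis (mono_tags, lifting) mem_Collect_eq one_closed)
      have g1: "\<one> \<in> (H #> \<one>) \<inter> (inv t <# (H #> t))"
      proof
        show "\<one> \<in> H #> \<one>" unfolding r_coset_def using oH by force
        have "\<one> = inv t \<otimes> (\<one> \<otimes> t)" using tc by simp
        then show "\<one> \<in> inv t <# (H #> t)" unfolding l_coset_def r_coset_def using oH by blast
      qed
      have k0: "h \<in> H #> \<one>" unfolding r_coset_def using hH hcar by force
      have k1: "h \<in> (H #> \<one>) \<inter> (inv t <# (H #> t))" using k0 hm by blast
      note o2 = bspec[OF ori[unfolded orientable_def] orb, unfolded prod.case]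
      note eq = bspec[OF bspec[OF o2 g1] k1]
      have e1: "chiH G H T \<chi> \<one> = 1"
        using uniq[OF assms(1,3,4) oH assms(5)] chi1 unfolding chiH_def by simp
      have e2: "chiH G H T \<chi> (t \<otimes> \<one>) = 1"
        using uniq[OF assms(1,3,4) oH assms(7)] chi1 tc unfolding chiH_def by simp
      have e3: "chiH G H T \<chi> h = \<chi> h"
        using uniq[OF assms(1,3,4) hH assms(5)] hcar unfolding chiH_def by simp
      have e4: "chiH G H T \<chi> (t \<otimes> h) = \<chi> c"
        using uniq[OF assms(1,3,4) cH assms(7)] th unfolding chiH_def by simp
      from eq have "inverse (\<chi> h) * \<chi> c = 1" using e1 e2 e3 e4 by simp
      moreover have "\<chi> (t \<otimes> h \<otimes> inv t \<otimes> inv h) = \<chi> c * inverse (\<chi> h)"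
        using thi chim[OF cH invH[OF hH]] chii[OF hH] by simp
      ultimately show "\<chi> (t \<otimes> h \<otimes> inv t \<otimes> inv h) = 1" by (simp add: mult.commute)
    qed
  next
    assume R: "\<forall>h \<in> H \<inter> (inv t <# (H #> t)). \<chi> (t \<otimes> h \<otimes> inv t \<otimes> inv h) = 1"
    have main: "inverse (chiH G H T \<chi> g) * chiH G H T \<chi> (t \<otimes> g) =
          inverse (chiH G H T \<chi> k) * chiH G H T \<chi> (t \<otimes> k)"
      if "(u, v) \<in> orbital G H T t" and gm: "g \<in> (H #> u) \<inter> (inv t <# (H #> v))"
        and km: "k \<in> (H #> u) \<inter> (inv t <# (H #> v))" for u v g k
    proof -
      from that(1) obtain x where xc: "x \<in> carrier G" and uv: "u = Tpart G H T (\<one> \<otimes> x)" "v = Tpart G H T (t \<otimes> x)"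
        unfolding orbital_def by blast
      have "\<one> \<otimes> x \<in> carrier G" "t \<otimes> x \<in> carrier G" using xc tc by auto
      then have uT: "u \<in> T" and vT: "v \<in> T" unfolding uv
        using conjunct1[OF conjunct2[OF decomp[OF rt]]] by auto
      have uc: "u \<in> carrier G" and vc: "v \<in> carrier G" using uT vT Tc by auto
      from gm obtain a b where aH: "a \<in> H" and bH: "b \<in> H" and ga: "g = a \<otimes> u" and gb: "g = inv t \<otimes> (b \<otimes> v)"
        unfolding l_coset_def r_coset_def by blast
      from km obtain a' b' where aH': "a' \<in> H" and bH': "b' \<in> H" and ka: "k = a' \<otimes> u" and kb: "k = inv t \<otimes> (b' \<otimes> v)"
        unfolding l_coset_def r_coset_def by blast
      have ac: "a \<in> carrier G" "a' \<in> carrier G" "b \<in> carrier G" "b' \<in> carrier G" using aH aH' bH bH' Hc by auto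
      have tg: "t \<otimes> g = b \<otimes> v" using gb tc ac vc by (simp add: m_assoc cancel1[OF assms(1)])
      have tk: "t \<otimes> k = b' \<otimes> v" using kb tc ac vc by (simp add: m_assoc cancel1[OF assms(1)])
      have c1: "chiH G H T \<chi> g = \<chi> a" using uniq[OF assms(1,3,4) aH uT] ga unfolding chiH_def by simp
      have c2: "chiH G H T \<chi> k = \<chi> a'" using uniq[OF assms(1,3,4) aH' uT] ka unfolding chiH_def by simp
      have c3: "chiH G H T \<chi> (t \<otimes> g) = \<chi> b" using uniq[OF assms(1,3,4) bH vT] tg unfolding chiH_def by simp
      have c4: "chiH G H T \<chi> (t \<otimes> k) = \<chi> b'" using uniq[OF assms(1,3,4) bH' vT] tk unfolding chiH_def by simp
      define h where "h = a' \<otimes> inv a"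
      have hH: "h \<in> H" unfolding h_def using aH aH' mulH invH by blast
      have hc: "h \<in> carrier G" using hH Hc by blast
      have kh: "k = h \<otimes> g" unfolding h_def using ka ga ac uc by (simp add: m_assoc cancel1[OF assms(1)])
      have gc: "g \<in> carrier G" using ga ac uc by simp
      have "t \<otimes> h \<otimes> inv t = (t \<otimes> k) \<otimes> inv (t \<otimes> g)"
        using kh tc hc gc by (simp add: m_assoc inv_mult_group cancel1[OF assms(1)])
      also have "\<dots> = b' \<otimes> inv b" using tk tg ac vc by (simp add: m_assoc inv_mult_group cancel1[OF assms(1)])
      finally have tht: "t \<otimes> h \<otimes> inv t = b' \<otimes> inv b" .
      have "h = inv t \<otimes> ((t \<otimes> h \<otimes> inv t) \<otimes> t)" using tc hc
        by (simp add: m_assoc cancel1[OF assms(1)])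
      then have "h = inv t \<otimes> ((b' \<otimes> inv b) \<otimes> t)" unfolding tht .
      then have "h \<in> inv t <# (H #> t)" unfolding l_coset_def r_coset_def
        using mulH[OF bH' invH[OF bH]] by blast
      with R hH have "\<chi> (t \<otimes> h \<otimes> inv t \<otimes> inv h) = 1" by blast
      then have "\<chi> b' * inverse (\<chi> b) * inverse (\<chi> h) = 1"
        using tht chim[OF mulH[OF bH' invH[OF bH]] invH[OF hH]] chim[OF bH' invH[OF bH]] chii bH hH by simp
      moreover have "\<chi> h = \<chi> a' * inverse (\<chi> a)" unfolding h_def using chim[OF aH' invH[OF aH]] chii[OF aH] by simp
      ultimately have "\<chi> b' * inverse (\<chi> b) * inverse (\<chi> a' * inverse (\<chi> a)) = 1" by simp
      then show "inverse (chiH G H T \<chi> g) * chiH G H T \<chi> (t \<otimes> g) =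
          inverse (chiH G H T \<chi> k) * chiH G H T \<chi> (t \<otimes> k)"
        using c1 c2 c3 c4 chinz aH aH' bH bH'
        by (simp add: field_simps split: if_splits)
    qed
    show "orientable G H T \<chi> t"
      unfolding orientable_def
      by (clarify, rule main) auto
  qed
qed

end
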